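(* Let $\iota$ be the base type. There is no closed term $\cdot\vdash t:\iota\to\Diamond\iota$ in $\lambda^{S}$ or in $\lambda^{SJ}$ (so axiom R, $A\to\Diamond A$, is not derivable in these calculi), and there is no closed term $\cdot\vdash t:\Diamond\Diamond\iota\to\Diamond\iota$ in $\lambda^{S}$ or in $\lambda^{SR}$ (so axiom J, $\Diamond\Diamond A\to\Diamond A$, is not derivable in these calculi).
   Context: Types: $A,B ::= \iota \mid 1 \mid A\times B \mid A\to B \mid \Diamond A$ ($\iota$ a base type); contexts are lists of distinct typed variables, $\cdot$ the empty context. Simply typed terms: variables, $()$, $\langle t,u\rangle$, $\mathsf{fst}\,t$, $\mathsf{snd}\,t$, $\lambda x.t$, $t\,u$ with the standard typing rules. Modal term formers: (letmap) if $\Gamma\vdash t:\Diamond A$ and $\Gamma,x:A\vdash u:B$ then $\Gamma\vdash\mathsf{letmap}\ x=t\ \mathsf{in}\ u:\Diamond B$; (ret) if $\Gamma\vdash t:A$ then $\Gamma\vdash\mathsf{ret}\,t:\Diamond A$; (let) if $\Gamma\vdash t:\Diamond A$ and $\Gamma,x:A\vdash u:\Diamond B$ then $\Gamma\vdash\mathsf{let}\ x=t\ \mathsf{in}\ u:\Diamond B$. The calculus $\lambda^{S}$ has the simply typed terms plus letmap; $\lambda^{SR}$ has letmap and ret; $\lambda^{SJ}$ has letmap and let. *)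

theory Defs
  imports Main
begin

datatype ty = Iota | Unit | Prod ty ty | Fun ty ty | Dia ty

type_synonym var = nat

datatype tm =
    Var var
  | UnitTm
  | Pair tm tm
  | Fst tm
  | Snd tm
  | Lam var tm
  | App tm tm
  | LetMap var tm tm
  | Ret tm
  | Let var tm tm

datatype calculus = CS | CSR | CSJ

type_synonym ctx = "(var \<times> ty) list"

text \<open>Typing judgement  L ; Gamma |- t : A  for calculus L.  Contexts are lists
  of distinct typed variables; Gamma, x:A is  Gamma @ [(x,A)]  with x fresh.\<close>
inductive typing :: "calculus \<Rightarrow> ctx \<Rightarrow> tm \<Rightarrow> ty \<Rightarrow> bool" where
  T_Var: "distinct (map fst \<Gamma>) \<Longrightarrow> (x, A) \<in> set \<Gamma> \<Longrightarrow> typing L \<Gamma> (Var x) A"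
| T_Unit: "distinct (map fst \<Gamma>) \<Longrightarrow> typing L \<Gamma> UnitTm Unit"
| T_Pair: "typing L \<Gamma> t A \<Longrightarrow> typing L \<Gamma> u B \<Longrightarrow> typing L \<Gamma> (Pair t u) (Prod A B)"
| T_Fst: "typing L \<Gamma> t (Prod A B) \<Longrightarrow> typing L \<Gamma> (Fst t) A"
| T_Snd: "typing L \<Gamma> t (Prod A B) \<Longrightarrow> typing L \<Gamma> (Snd t) B"
| T_Lam: "x \<notin> set (map fst \<Gamma>) \<Longrightarrow> typing L (\<Gamma> @ [(x, A)]) t B
          \<Longrightarrow> typing L \<Gamma> (Lam x t) (Fun A B)"
| T_App: "typing L \<Gamma> t (Fun A B) \<Longrightarrow> typing L \<Gamma> u A \<Longrightarrow> typing L \<Gamma> (App t u) B"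
| T_LetMap: "typing L \<Gamma> t (Dia A) \<Longrightarrow> x \<notin> set (map fst \<Gamma>)
          \<Longrightarrow> typing L (\<Gamma> @ [(x, A)]) u B \<Longrightarrow> typing L \<Gamma> (LetMap x t u) (Dia B)"
| T_Ret: "L = CSR \<Longrightarrow> typing L \<Gamma> t A \<Longrightarrow> typing L \<Gamma> (Ret t) (Dia A)"
| T_Let: "L = CSJ \<Longrightarrow> typing L \<Gamma> t (Dia A) \<Longrightarrow> x \<notin> set (map fst \<Gamma>)
          \<Longrightarrow> typing L (\<Gamma> @ [(x, A)]) u (Dia B) \<Longrightarrow> typing L \<Gamma> (Let x t u) (Dia B)"

end

theory Submission
  imports Defs
begin

fun sem :: "(nat \<Rightarrow> nat) \<Rightarrow> nat \<Rightarrow> ty \<Rightarrow> nat" where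
  "sem j i Iota = i"
| "sem j i Unit = 3"
| "sem j i (Prod a b) = min (sem j i a) (sem j i b)"
| "sem j i (Fun a b) = (if sem j i a \<le> sem j i b then 3 else sem j i b)"
| "sem j i (Dia a) = j (sem j i a)"

fun csem :: "(nat \<Rightarrow> nat) \<Rightarrow> nat \<Rightarrow> ctx \<Rightarrow> nat" where
  "csem j i [] = 3"
| "csem j i (p # G) = min (sem j i (snd p)) (csem j i G)"

lemma csem_app[simp]: "csem j i (G @ [(x,A)]) = min (csem j i G) (sem j i A)"
  by (induction G) auto

lemma csem_le3: "csem j i G \<le> 3"
  by (induction G) auto

lemma csem_var: "(x, A) \<in> set G \<Longrightarrow> csem j i G \<le> sem j i A"
  by (induction G) auto

lemma sound:
  assumes "typing L G t A"
    and mono: "\<And>a b. a \<le> b \<Longrightarrow> j a \<le> j b"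
    and str: "\<And>a b. min (j a) b \<le> j (min a b)"
    and R: "L = CSR \<longrightarrow> (\<forall>x. x \<le> j x)"
    and J: "L = CSJ \<longrightarrow> (\<forall>x. j (j x) \<le> j x)"
  shows "csem j i G \<le> sem j i A"
  using assms(1) R J
proof (induction rule: typing.induct)
  case (T_Var G x A L)
  then show ?case by (simp add: csem_var)
next
  case (T_Unit G L)
  then show ?case by (simp add: csem_le3)
next
  case (T_Lam x G L A t B)
  then show ?case using csem_le3[of j i G] by auto
next
  case (T_App L G t A B u)
  then show ?case by (auto split: if_splits)
next
  case (T_LetMap L G t A x u B)
  have "csem j i G \<le> min (j (sem j i A)) (csem j i G)" using T_LetMap by simp
  also have "\<dots> \<le> j (min (sem j i A) (csem j i G))" by (rule str)
  also have "\<dots> \<le> j (sem j i B)" using T_LetMap by (intro mono) (simp add: min.commute)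
  finally show ?case by simp
next
  case (T_Ret L G t A)
  then have "sem j i A \<le> j (sem j i A)" by blast
  then show ?case using T_Ret by (metis order_trans sem.simps(5))
next
  case (T_Let L G t A x u B)
  have "csem j i G \<le> min (j (sem j i A)) (csem j i G)" using T_Let by simp
  also have "\<dots> \<le> j (min (sem j i A) (csem j i G))" by (rule str)
  also have "\<dots> \<le> j (j (sem j i B))" using T_Let by (intro mono) (simp add: min.commute)
  also have "\<dots> \<le> j (sem j i B)" using T_Let by auto
  finally show ?case by simp
qed auto

lemma noR:
  assumes "typing L [] t (Fun Iota (Dia Iota))" "L \<noteq> CSR"
  shows False
  using sound[OF assms(1), of "\<lambda>x. 0" 3] assms(2) by simp

lemma noJ:
  assumes "typing L [] t (Fun (Dia (Dia Iota)) (Dia Iota))" "L \<noteq> CSJ"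
  shows False
proof -
  have "csem (\<lambda>x. if 3 \<le> x then x else x+1) 1 [] \<le> sem (\<lambda>x. if 3 \<le> x then x else x+1) 1 (Fun (Dia (Dia Iota)) (Dia Iota))"
    by (rule sound[OF assms(1)]) (use assms(2) in auto)
  then show False by simp
qed

theorem corollary5p3:
  shows "(\<nexists>t. typing CS [] t (Fun Iota (Dia Iota)))
       \<and> (\<nexists>t. typing CSJ [] t (Fun Iota (Dia Iota)))
       \<and> (\<nexists>t. typing CS [] t (Fun (Dia (Dia Iota)) (Dia Iota)))
       \<and> (\<nexists>t. typing CSR [] t (Fun (Dia (Dia Iota)) (Dia Iota)))"
  using noR noJ by blast

end
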